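(* Let $P,K:\mathbb{N}_0\to\mathbb{N}_0$ be a scaling with $\lim_{n\to\infty}K_n^2/P_n=0$, and let $p:\mathbb{N}_0\to[0,1]$ satisfy $p_n\sim 1-q(\theta_n)$. Then $$\frac{\mathbb{E}[T_n(\theta_n)]}{\mathbb{E}[T_n(p_n)]}\sim 1+\frac{P_n}{K_n^3}.$$
   Context: Random key graph: for positive integers $K\le P$, $\theta=(K,P)$ and $n\ge3$, each of $n$ nodes receives independently a uniformly random $K$-element subset of $\{1,\dots,P\}$; distinct nodes are adjacent iff their subsets intersect; $T_n(\theta)$ is the number of triangles in this graph. $q(\theta)=\binom{P-K}{K}/\binom{P}{K}$ if $2K\le P$ and $0$ otherwise. $T_n(p)$ is the number of triangles in the Erdős–Rényi graph $\mathbb{G}(n;p)$ (each edge present independently with probability $p$), so $\mathbb{E}[T_n(p)]=\binom n3 p^3$. A scaling is a pair $P,K:\mathbb{N}_0\to\mathbb{N}_0$ with $1\le K_n\le P_n$, and $\theta_n=(K_n,P_n)$; $a_n\sim b_n$ means $a_n/b_n\to1$. *)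

theory Defs
  imports "HOL-Probability.Probability"
begin

definition key_rings :: "nat \<Rightarrow> nat \<Rightarrow> nat set set" where
  "key_rings K P = {S. S \<subseteq> {1..P} \<and> card S = K}"

definition key_assignment :: "nat \<Rightarrow> nat \<Rightarrow> nat \<Rightarrow> (nat \<Rightarrow> nat set) pmf" where
  "key_assignment n K P = Pi_pmf {..<n} {} (\<lambda>_. pmf_of_set (key_rings K P))"

definition triangles :: "nat \<Rightarrow> (nat \<Rightarrow> nat \<Rightarrow> bool) \<Rightarrow> nat" where
  "triangles n adj = card {T. T \<subseteq> {..<n} \<and> card T = 3 \<and>
       (\<forall>i\<in>T. \<forall>j\<in>T. i \<noteq> j \<longrightarrow> adj i j)}"

definition rkg_adj :: "(nat \<Rightarrow> nat set) \<Rightarrow> nat \<Rightarrow> nat \<Rightarrow> bool" where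
  "rkg_adj S i j \<longleftrightarrow> i \<noteq> j \<and> S i \<inter> S j \<noteq> {}"

text \<open>E[T_n(theta)] with theta = (K,P).\<close>
definition ET_rkg :: "nat \<Rightarrow> nat \<Rightarrow> nat \<Rightarrow> real" where
  "ET_rkg n K P = measure_pmf.expectation (key_assignment n K P)
                    (\<lambda>S. real (triangles n (rkg_adj S)))"

definition er_edges :: "nat \<Rightarrow> real \<Rightarrow> (nat \<times> nat \<Rightarrow> bool) pmf" where
  "er_edges n p = Pi_pmf {(i,j). i < j \<and> j < n} False (\<lambda>_. bernoulli_pmf p)"

definition er_adj :: "(nat \<times> nat \<Rightarrow> bool) \<Rightarrow> nat \<Rightarrow> nat \<Rightarrow> bool" where
  "er_adj e i j \<longleftrightarrow> i \<noteq> j \<and> e (min i j, max i j)"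

definition ET_er :: "nat \<Rightarrow> real \<Rightarrow> real" where
  "ET_er n p = measure_pmf.expectation (er_edges n p)
                    (\<lambda>e. real (triangles n (er_adj e)))"

text \<open>q(theta): probability that two key rings are disjoint.\<close>
definition q :: "nat \<Rightarrow> nat \<Rightarrow> real" where
  "q K P = (if 2 * K \<le> P then real ((P - K) choose K) / real (P choose K) else 0)"

end

theory Submission
  imports Defs
begin


definition Trip :: "nat \<Rightarrow> nat set set" where
  "Trip n = {T. T \<subseteq> {..<n} \<and> card T = 3}"

definition good :: "(nat \<Rightarrow> nat \<Rightarrow> bool) \<Rightarrow> nat set \<Rightarrow> bool" where
  "good adj T \<longleftrightarrow> (\<forall>i\<in>T. \<forall>j\<in>T. i \<noteq> j \<longrightarrow> adj i j)"

lemma finite_Trip: "finite (Trip n)"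
  unfolding Trip_def by (rule finite_subset[of _ "Pow {..<n}"]) auto

lemma card_Trip: "card (Trip n) = n choose 3"
  unfolding Trip_def using n_subsets[of "{..<n}" 3] by simp

lemma tri_sum: "real (triangles n adj) = (\<Sum>T\<in>Trip n. if good adj T then 1 else 0)"
proof -
  have "triangles n adj = card {T\<in>Trip n. good adj T}"
    unfolding triangles_def Trip_def good_def by (rule arg_cong[where f=card]) auto
  also have "real \<dots> = (\<Sum>T\<in>{T\<in>Trip n. good adj T}. 1)" by simp
  also have "\<dots> = (\<Sum>T\<in>Trip n. if good adj T then 1 else 0)"
    by (rule sum.inter_filter[OF finite_Trip])
  finally show ?thesis .
qed

lemma exp_tri:
  "measure_pmf.expectation M (\<lambda>S. real (triangles n (adj S))) =
     (\<Sum>T\<in>Trip n. measure_pmf.prob M {S. good (adj S) T})"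
proof -
  have "measure_pmf.expectation M (\<lambda>S. real (triangles n (adj S))) =
        measure_pmf.expectation M (\<lambda>S. \<Sum>T\<in>Trip n. indicator {S. good (adj S) T} S)"
    by (simp add: tri_sum indicator_def of_bool_def)
  also have "\<dots> = (\<Sum>T\<in>Trip n. measure_pmf.expectation M (indicator {S. good (adj S) T}))"
    by (rule Bochner_Integration.integral_sum)
       (auto intro!: measure_pmf.integrable_const_bound[where B=1] simp: indicator_def)
  also have "\<dots> = (\<Sum>T\<in>Trip n. measure_pmf.prob M {S. good (adj S) T})"
    by simp
  finally show ?thesis .
qed

definition Epairs :: "nat set \<Rightarrow> (nat \<times> nat) set" where
  "Epairs T = {(i,j). i \<in> T \<and> j \<in> T \<and> i < j}"

lemma good_er: "good (er_adj e) T \<longleftrightarrow> (\<forall>pr\<in>Epairs T. e pr)"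
  unfolding good_def er_adj_def Epairs_def
  by (auto simp: min_def max_def)

lemma card_Epairs: assumes "card T = 3" shows "card (Epairs T) = 3"
proof -
  obtain x y z where T: "T = {x,y,z}" "x \<noteq> y" "y \<noteq> z" "x \<noteq> z"
    using assms unfolding card_3_iff by blast
  have "Epairs T = {(min x y, max x y), (min x z, max x z), (min y z, max y z)}"
    unfolding Epairs_def T(1) using T(2-4) by (auto simp: min_def max_def)
  also have "card \<dots> = 3" using T(2-4) by (auto simp: min_def max_def card_insert_if)
  finally show ?thesis .
qed

lemma prob_er:
  assumes T: "T \<in> Trip n" and p: "0 \<le> p" "p \<le> 1"
  shows "measure_pmf.prob (er_edges n p) {e. good (er_adj e) T} = p ^ 3"
proof -
  define I where "I = {(i,j). i < j \<and> j < n}"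
  have finI: "finite I" unfolding I_def
    by (rule finite_subset[of _ "{..<n} \<times> {..<n}"]) auto
  have sub: "Epairs T \<subseteq> I" using T unfolding Trip_def Epairs_def I_def by auto
  have "{e. good (er_adj e) T} = Pi I (\<lambda>x. if x \<in> Epairs T then {True} else UNIV)"
    using sub by (auto simp: good_er Pi_def)
  hence "measure_pmf.prob (er_edges n p) {e. good (er_adj e) T} =
      (\<Prod>x\<in>I. measure_pmf.prob (bernoulli_pmf p) (if x \<in> Epairs T then {True} else UNIV))"
    unfolding er_edges_def I_def[symmetric] using finI by (simp add: measure_Pi_pmf_Pi)
  also have "\<dots> = (\<Prod>x\<in>I. if x \<in> Epairs T then p else 1)"
    using p by (intro prod.cong) (auto simp: measure_pmf_single)
  also have "\<dots> = p ^ card (Epairs T)"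
    using sub finI by (simp add: prod.If_cases Int_absorb1 Int_absorb2)
  also have "card (Epairs T) = 3" using T card_Epairs unfolding Trip_def by auto
  finally show ?thesis .
qed

lemma ET_er_eq: assumes "0 \<le> p" "p \<le> 1" shows "ET_er n p = real (n choose 3) * p ^ 3"
  unfolding ET_er_def exp_tri using prob_er[OF _ assms] by (simp add: card_Trip)

definition Tri :: "nat \<Rightarrow> nat \<Rightarrow> (nat set \<times> nat set \<times> nat set) set" where
  "Tri K P = {(A,B,C). A \<in> key_rings K P \<and> B \<in> key_rings K P \<and> C \<in> key_rings K P \<and>
      A \<inter> B \<noteq> {} \<and> B \<inter> C \<noteq> {} \<and> A \<inter> C \<noteq> {}}"

lemma finite_key_rings: "finite (key_rings K P)"
  unfolding key_rings_def by (rule finite_subset[of _ "Pow {1..P}"]) auto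

lemma card_key_rings: "card (key_rings K P) = P choose K"
  unfolding key_rings_def using n_subsets[of "{1..P}" K] by simp

lemma key_rings_ne: assumes "K \<le> P" shows "key_rings K P \<noteq> {}"
proof -
  have "{1..K} \<in> key_rings K P" using assms unfolding key_rings_def by auto
  thus ?thesis by auto
qed

lemma good_rkg3:
  assumes "x \<noteq> y" "y \<noteq> z" "x \<noteq> z"
  shows "good (rkg_adj f) {x,y,z} \<longleftrightarrow> f x \<inter> f y \<noteq> {} \<and> f y \<inter> f z \<noteq> {} \<and> f x \<inter> f z \<noteq> {}"
  using assms unfolding good_def rkg_adj_def by (auto simp: Int_commute)

lemma prob_rkg:
  assumes T: "T \<in> Trip n" and KP: "K \<le> P"
  shows "measure_pmf.prob (key_assignment n K P) {S. good (rkg_adj S) T} =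
           real (card (Tri K P)) / real (card (key_rings K P)) ^ 3"
proof -
  let ?R = "key_rings K P"
  let ?G = "{S. good (rkg_adj S) T}"
  define r where "r = (\<lambda>(f::nat \<Rightarrow> nat set) x. if x \<in> T then f x else {})"
  have Tsub: "T \<subseteq> {..<n}" and cT: "card T = 3" using T unfolding Trip_def by auto
  have finT: "finite T" using cT by (metis card.infinite zero_neq_numeral)
  have pre: "r -` ?G = ?G"
    unfolding r_def good_def rkg_adj_def by auto
  have "measure_pmf.prob (key_assignment n K P) ?G =
        measure_pmf.prob (map_pmf r (key_assignment n K P)) ?G"
    using pre by (simp only: measure_map_pmf)
  also have "map_pmf r (key_assignment n K P) = Pi_pmf T {} (\<lambda>_. pmf_of_set ?R)"
    unfolding key_assignment_def r_def using Tsub by (subst Pi_pmf_subset[of "{..<n}" T]) auto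
  also have "\<dots> = pmf_of_set (PiE_dflt T {} (\<lambda>_. ?R))"
    using finT finite_key_rings key_rings_ne[OF KP] by (intro Pi_pmf_of_set) auto
  also have "measure_pmf.prob \<dots> ?G =
       real (card (PiE_dflt T {} (\<lambda>_. ?R) \<inter> ?G)) / real (card (PiE_dflt T {} (\<lambda>_. ?R)))"
    using finT finite_key_rings key_rings_ne[OF KP]
    by (intro measure_pmf_of_set) auto
  also have "card (PiE_dflt T {} (\<lambda>_. ?R)) = card ?R ^ 3"
    using finT finite_key_rings cT by (simp add: card_PiE_dflt)
  also have "card (PiE_dflt T {} (\<lambda>_. ?R) \<inter> ?G) = card (Tri K P)"
  proof -
    obtain x y z where xyz: "T = {x,y,z}" "x \<noteq> y" "y \<noteq> z" "x \<noteq> z"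
      using cT unfolding card_3_iff by blast
    have "bij_betw (\<lambda>f. (f x, f y, f z)) (PiE_dflt T {} (\<lambda>_. ?R) \<inter> ?G) (Tri K P)"
    proof (rule bij_betw_imageI)
      show "inj_on (\<lambda>f. (f x, f y, f z)) (PiE_dflt T {} (\<lambda>_. ?R) \<inter> ?G)"
      proof (rule inj_onI)
        fix f g assume f: "f \<in> PiE_dflt T {} (\<lambda>_. ?R) \<inter> ?G" and g: "g \<in> PiE_dflt T {} (\<lambda>_. ?R) \<inter> ?G"
          and eq: "(f x, f y, f z) = (g x, g y, g z)"
        show "f = g"
        proof
          fix w show "f w = g w"
            using f g eq unfolding PiE_dflt_def xyz(1) by (cases "w \<in> {x,y,z}") auto
        qed
      qed
      show "(\<lambda>f. (f x, f y, f z)) ` (PiE_dflt T {} (\<lambda>_. ?R) \<inter> ?G) = Tri K P"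
      proof
        show "(\<lambda>f. (f x, f y, f z)) ` (PiE_dflt T {} (\<lambda>_. ?R) \<inter> ?G) \<subseteq> Tri K P"
          using xyz unfolding Tri_def PiE_dflt_def by (auto simp: good_rkg3)
        show "Tri K P \<subseteq> (\<lambda>f. (f x, f y, f z)) ` (PiE_dflt T {} (\<lambda>_. ?R) \<inter> ?G)"
        proof
          fix t assume t: "t \<in> Tri K P"
          obtain A B C where tABC: "t = (A,B,C)" by (cases t) auto
          define f where "f = (\<lambda>_. {})(x := A, y := B, z := C)"
          have "f \<in> PiE_dflt T {} (\<lambda>_. ?R) \<inter> ?G"
            using t xyz unfolding tABC Tri_def PiE_dflt_def f_def by (auto simp: good_rkg3)
          moreover have "t = (f x, f y, f z)" using xyz unfolding tABC f_def by auto
          ultimately show "t \<in> (\<lambda>f. (f x, f y, f z)) ` (PiE_dflt T {} (\<lambda>_. ?R) \<inter> ?G)" by blast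
        qed
      qed
    qed
    thus ?thesis by (rule bij_betw_same_card)
  qed
  finally show ?thesis by simp
qed

definition tr :: "nat \<Rightarrow> nat \<Rightarrow> real" where
  "tr K P = real (card (Tri K P)) / real (card (key_rings K P)) ^ 3"

lemma ET_rkg_eq: assumes "K \<le> P" shows "ET_rkg n K P = real (n choose 3) * tr K P"
  unfolding ET_rkg_def exp_tri tr_def using prob_rkg[OF _ assms] by (simp add: card_Trip)



definition cnt :: "nat \<Rightarrow> nat \<Rightarrow> nat set \<Rightarrow> nat" where
  "cnt K P S = card {A \<in> key_rings K P. S \<subseteq> A}"

lemma cnt_eq:
  assumes S: "S \<subseteq> {1..P}" and s: "card S \<le> K"
  shows "cnt K P S = (P - card S) choose (K - card S)"
proof -
  have finS: "finite S" using S finite_subset by blast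
  have "bij_betw (\<lambda>A. A - S) {A \<in> key_rings K P. S \<subseteq> A}
          {B. B \<subseteq> {1..P} - S \<and> card B = K - card S}"
  proof (rule bij_betw_imageI)
    show "inj_on (\<lambda>A. A - S) {A \<in> key_rings K P. S \<subseteq> A}"
      by (rule inj_onI) blast
    show "(\<lambda>A. A - S) ` {A \<in> key_rings K P. S \<subseteq> A} = {B. B \<subseteq> {1..P} - S \<and> card B = K - card S}"
    proof
      show "(\<lambda>A. A - S) ` {A \<in> key_rings K P. S \<subseteq> A} \<subseteq> {B. B \<subseteq> {1..P} - S \<and> card B = K - card S}"
        unfolding key_rings_def using finS by (auto simp: card_Diff_subset)
      show "{B. B \<subseteq> {1..P} - S \<and> card B = K - card S} \<subseteq> (\<lambda>A. A - S) ` {A \<in> key_rings K P. S \<subseteq> A}"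
      proof
        fix B assume B: "B \<in> {B. B \<subseteq> {1..P} - S \<and> card B = K - card S}"
        have finB: "finite B" using B finite_subset[of B "{1..P}"] by auto
        have "B \<union> S \<in> {A \<in> key_rings K P. S \<subseteq> A}"
        proof -
          have "card (B \<union> S) = card B + card S" using B finB finS by (intro card_Un_disjoint) auto
          thus ?thesis using B S s unfolding key_rings_def by auto
        qed
        moreover have "B = (B \<union> S) - S" using B by auto
        ultimately show "B \<in> (\<lambda>A. A - S) ` {A \<in> key_rings K P. S \<subseteq> A}" by blast
      qed
    qed
  qed
  hence "cnt K P S = card {B. B \<subseteq> {1..P} - S \<and> card B = K - card S}"
    unfolding cnt_def by (rule bij_betw_same_card)
  also have "\<dots> = card ({1..P} - S) choose (K - card S)" by (rule n_subsets) auto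
  also have "card ({1..P} - S) = P - card S" using S finS by (simp add: card_Diff_subset)
  finally show ?thesis .
qed

lemma cnt_zero:
  assumes "card S > K" shows "cnt K P S = 0"
proof -
  have E: "{A \<in> key_rings K P. S \<subseteq> A} = {}"
  proof (rule ccontr)
    assume "{A \<in> key_rings K P. S \<subseteq> A} \<noteq> {}"
    then obtain A where A: "A \<in> key_rings K P" "S \<subseteq> A" by blast
    have "finite A" using A(1) unfolding key_rings_def by (auto intro: finite_subset)
    hence "card S \<le> card A" using A(2) card_mono by blast
    thus False using A(1) assms unfolding key_rings_def by auto
  qed
  show ?thesis unfolding cnt_def E by simp
qed

lemma binom_step:
  assumes "1 \<le> k" "k \<le> m"
  shows "real m * real ((m - 1) choose (k - 1)) = real k * real (m choose k)"
proof -
  have "Suc (m - 1) * ((m - 1) choose (k - 1)) = (Suc (m - 1) choose Suc (k - 1)) * Suc (k - 1)"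
    by (rule Suc_times_binomial_eq)
  hence "m * ((m - 1) choose (k - 1)) = (m choose k) * k" using assms by simp
  hence "real (m * ((m - 1) choose (k - 1))) = real ((m choose k) * k)" by metis
  thus ?thesis by simp
qed

lemma ratio_bound:
  assumes "s \<le> K" "K \<le> P"
  shows "real ((P - s) choose (K - s)) * real P ^ s \<le> real (P choose K) * real K ^ s"
  using assms(1)
proof (induction s)
  case 0 then show ?case by simp
next
  case (Suc s)
  have sK: "s < K" using Suc.prems by simp
  have st: "real (P - s) * real ((P - s - 1) choose (K - s - 1)) = real (K - s) * real ((P - s) choose (K - s))"
    using binom_step[of "K - s" "P - s"] sK assms(2) by simp
  have Ps: "real P - real s > 0" using sK assms(2) by simp
  have C0: "real ((P - s) choose (K - s)) \<ge> 0" by simp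
  have st': "(real P - real s) * real ((P - Suc s) choose (K - Suc s)) = (real K - real s) * real ((P - s) choose (K - s))"
    using st sK assms(2) by (simp add: of_nat_diff)
  have "real ((P - Suc s) choose (K - Suc s)) * real P * (real P - real s)
        = real P * (real (K - s) * real ((P - s) choose (K - s)))"
    using st' sK by (simp add: of_nat_diff) (metis mult.commute mult.left_commute)
  also have "\<dots> \<le> real K * (real P - real s) * real ((P - s) choose (K - s))"
  proof -
    have "real P * real (K - s) \<le> real K * (real P - real s)"
      using sK assms(2) by (simp add: of_nat_diff algebra_simps) (simp add: mult_right_mono)
    thus ?thesis using C0 by (metis mult.assoc mult_right_mono)
  qed
  finally have "real ((P - Suc s) choose (K - Suc s)) * real P * (real P - real s)
      \<le> real K * real ((P - s) choose (K - s)) * (real P - real s)" by (simp add: algebra_simps)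
  hence A: "real ((P - Suc s) choose (K - Suc s)) * real P \<le> real K * real ((P - s) choose (K - s))"
    using Ps by simp
  have "real ((P - Suc s) choose (K - Suc s)) * real P ^ Suc s
      = (real ((P - Suc s) choose (K - Suc s)) * real P) * real P ^ s" by simp
  also have "\<dots> \<le> (real K * real ((P - s) choose (K - s))) * real P ^ s"
    using A by (intro mult_right_mono) auto
  also have "\<dots> = real K * (real ((P - s) choose (K - s)) * real P ^ s)" by simp
  also have "\<dots> \<le> real K * (real (P choose K) * real K ^ s)"
    using Suc by (intro mult_left_mono) auto
  finally show ?case by (simp add: algebra_simps)
qed

lemma cnt_bound:
  assumes S: "S \<subseteq> {1..P}" and KP: "1 \<le> K" "K \<le> P"
  shows "real (cnt K P S) \<le> real (P choose K) * (real K / real P) ^ card S"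
proof (cases "card S \<le> K")
  case True
  have "real (cnt K P S) * real P ^ card S \<le> real (P choose K) * real K ^ card S"
    using cnt_eq[OF S True] ratio_bound[OF True KP(2)] by simp
  moreover have "real P ^ card S > 0" using KP by simp
  ultimately show ?thesis by (simp add: power_divide field_simps)
next
  case False
  thus ?thesis using cnt_zero[of K S P] by simp
qed

lemma cnt1:
  assumes "x \<in> {1..P}" "1 \<le> K" "K \<le> P"
  shows "real (cnt K P {x}) = real (P choose K) * (real K / real P)"
proof -
  have "cnt K P {x} = (P - 1) choose (K - 1)" using cnt_eq[of "{x}" P K] assms by auto
  moreover have "real P * real ((P - 1) choose (K - 1)) = real K * real (P choose K)"
    using binom_step assms by auto
  moreover have "real P > 0" using assms by simp
  ultimately show ?thesis by (simp add: field_simps)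
qed

lemma cnt2:
  assumes "x \<in> {1..P}" "w \<in> {1..P}" "x \<noteq> w" "1 \<le> K" "K \<le> P"
  shows "real (cnt K P {x,w}) * (real P * (real P - 1)) = real (P choose K) * (real K * (real K - 1))"
proof (cases "K = 1")
  case True
  thus ?thesis using cnt_zero[of K "{x,w}" P] assms by simp
next
  case False
  hence K2: "2 \<le> K" using assms by simp
  have c: "card {x,w} = 2" using assms by simp
  have e0: "cnt K P {x,w} = (P - 2) choose (K - 2)" using cnt_eq[of "{x,w}" P K] assms K2 c by auto
  have e1: "real (P - 1) * real ((P - 1 - 1) choose (K - 1 - 1)) = real (K - 1) * real ((P - 1) choose (K - 1))"
    using binom_step[of "K - 1" "P - 1"] K2 assms by simp
  have e2: "real P * real ((P - 1) choose (K - 1)) = real K * real (P choose K)"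
    using binom_step assms by auto
  define a where "a = real (P choose K)"
  define b where "b = real ((P - 1) choose (K - 1))"
  define c where "c = real ((P - 2) choose (K - 2))"
  have f1: "(real P - 1) * c = (real K - 1) * b"
    using e1 K2 assms unfolding b_def c_def by (simp add: of_nat_diff numeral_2_eq_2)
  have f2: "real P * b = real K * a" using e2 unfolding a_def b_def .
  have "c * (real P * (real P - 1)) = real P * ((real P - 1) * c)" by (simp add: algebra_simps)
  also have "\<dots> = real P * ((real K - 1) * b)" using f1 by simp
  also have "\<dots> = (real K - 1) * (real P * b)" by (simp add: algebra_simps)
  also have "\<dots> = a * (real K * (real K - 1))" using f2 by (simp add: algebra_simps)
  finally show ?thesis using e0 unfolding a_def c_def by simp
qed



definition box :: "nat \<Rightarrow> nat \<Rightarrow> nat set \<Rightarrow> nat set \<Rightarrow> nat set \<Rightarrow> (nat set \<times> nat set \<times> nat set) set" where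
  "box K P S1 S2 S3 = {A \<in> key_rings K P. S1 \<subseteq> A} \<times> {B \<in> key_rings K P. S2 \<subseteq> B} \<times> {C \<in> key_rings K P. S3 \<subseteq> C}"

lemma finite_R3: "finite (key_rings K P \<times> key_rings K P \<times> key_rings K P)"
  using finite_key_rings by auto

lemma box_sub: "box K P S1 S2 S3 \<subseteq> key_rings K P \<times> key_rings K P \<times> key_rings K P"
  unfolding box_def by auto

lemma finite_box: "finite (box K P S1 S2 S3)"
  using finite_subset[OF box_sub finite_R3] .

lemma card_box: "card (box K P S1 S2 S3) = cnt K P S1 * cnt K P S2 * cnt K P S3"
  unfolding box_def cnt_def by (simp add: card_cartesian_product)

lemma box_bound:
  assumes "S1 \<subseteq> {1..P}" "S2 \<subseteq> {1..P}" "S3 \<subseteq> {1..P}" "1 \<le> K" "K \<le> P"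
  shows "real (card (box K P S1 S2 S3)) \<le> real (P choose K) ^ 3 * (real K / real P) ^ (card S1 + card S2 + card S3)"
proof -
  let ?N = "real (P choose K)" and ?r = "real K / real P"
  have "real (card (box K P S1 S2 S3)) = real (cnt K P S1) * real (cnt K P S2) * real (cnt K P S3)"
    by (simp add: card_box)
  also have "\<dots> \<le> (?N * ?r ^ card S1) * (?N * ?r ^ card S2) * (?N * ?r ^ card S3)"
    using cnt_bound[OF assms(1,4,5)] cnt_bound[OF assms(2,4,5)] cnt_bound[OF assms(3,4,5)]
    by (intro mult_mono) auto
  also have "\<dots> = ?N ^ 3 * ?r ^ (card S1 + card S2 + card S3)"
    by (simp add: power_add algebra_simps power3_eq_cube)
  finally show ?thesis .
qed

lemma card_cover3:
  assumes "finite X" "X - (U1 \<union> U2 \<union> U3) \<subseteq> Z" "finite Z" "finite U1" "finite U2" "finite U3"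
  shows "card X \<le> card Z + card U1 + card U2 + card U3"
proof -
  have "X \<subseteq> Z \<union> U1 \<union> U2 \<union> U3" using assms(2) by auto
  hence "card X \<le> card (Z \<union> U1 \<union> U2 \<union> U3)" using assms by (intro card_mono) auto
  also have "\<dots> \<le> card Z + card U1 + card U2 + card U3"
    by (meson add_right_mono card_Un_le order_trans)
  finally show ?thesis .
qed

lemma card2: "card {a,b} = (if a = b then 1 else 2)"
  by simp

lemma card3: "a \<noteq> b \<Longrightarrow> b \<noteq> c \<Longrightarrow> a \<noteq> c \<Longrightarrow> card {a,b,c} = 3"
  by simp

lemma up_pw:
  fixes r :: real
  assumes "0 \<le> r" "r \<le> 1"
  shows "r ^ (card {x,z} + card {x,y} + card {y,z}) \<le>
    r^6 + (if x = y then r^5 else 0) + (if y = z then r^5 else 0) + (if x = z then r^5 else 0)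
      + (if x = y \<and> y = z then r^3 else 0)"
proof -
  have e: "card {x,z} + card {x,y} + card {y,z} = (if x = y \<and> y = z then 3 else if x = y \<or> y = z \<or> x = z then 5 else 6)"
    by (auto simp: card2)
  have "r^6 \<ge> 0" "r^5 \<ge> 0" "r^3 \<ge> 0" using assms by auto
  thus ?thesis unfolding e by auto
qed

lemma sum_if_const: "(\<Sum>z\<in>I. if P then f z else (0::real)) = (if P then (\<Sum>z\<in>I. f z) else 0)"
  by (cases P) simp_all

lemma sum_delta_real: "finite I \<Longrightarrow> x \<in> I \<Longrightarrow> (\<Sum>y\<in>I. if x = y then (c::real) else 0) = c"
  by simp

lemma sum3_if:
  fixes c :: real
  assumes "finite I"
  shows "(\<Sum>x\<in>I. \<Sum>y\<in>I. \<Sum>z\<in>I. r^6 + (if x = y then c else 0) + (if y = z then c else 0) + (if x = z then c else 0)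
      + (if x = y \<and> y = z then d else 0)) = real (card I) ^ 3 * r^6 + 3 * real (card I) ^ 2 * c + real (card I) * d"
proof -
  let ?n = "real (card I)"
  have e: "(if x = y \<and> y = z then d else 0) = (if x = y then (if y = z then d else 0) else 0)" for x y z :: 'a
    by simp
  have s1: "(\<Sum>x\<in>I. \<Sum>y\<in>I. \<Sum>z\<in>I. (if x = y then c else 0)) = ?n ^ 2 * c"
    using assms by (simp add: power2_eq_square sum_distrib_left[symmetric])
  have s2: "(\<Sum>x\<in>I. \<Sum>y\<in>I. \<Sum>z\<in>I. (if y = z then c else 0)) = ?n ^ 2 * c"
    using assms by (simp add: power2_eq_square)
  have s3: "(\<Sum>x\<in>I. \<Sum>y\<in>I. \<Sum>z\<in>I. (if x = z then c else 0)) = ?n ^ 2 * c"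
    using assms by (simp add: power2_eq_square)
  have s4: "(\<Sum>x\<in>I. \<Sum>y\<in>I. \<Sum>z\<in>I. (if x = y \<and> y = z then d else 0)) = ?n * d"
    using assms by (simp add: e sum_if_const)
  have s0: "(\<Sum>x\<in>I. \<Sum>y\<in>I. \<Sum>z\<in>I. r^6) = ?n ^ 3 * r ^ 6"
    by (simp add: power3_eq_cube)
  show ?thesis
    by (simp only: sum.distrib s0 s1 s2 s3 s4)
qed

lemma tr_upper:
  assumes KP: "1 \<le> K" "K \<le> P"
  shows "tr K P \<le> real K ^ 3 / real P ^ 2 + real K ^ 6 / real P ^ 3 + 3 * real K ^ 5 / real P ^ 3"
proof -
  let ?I = "{1..P}"
  let ?N = "real (P choose K)" and ?r = "real K / real P"
  let ?B = "\<lambda>x y z. box K P {x,z} {x,y} {y,z}"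
  have Npos: "?N > 0" using KP by simp
  have r01: "0 \<le> ?r" "?r \<le> 1" using KP by auto
  have sub: "Tri K P \<subseteq> (\<Union>x\<in>?I. \<Union>y\<in>?I. \<Union>z\<in>?I. ?B x y z)"
  proof
    fix t assume t: "t \<in> Tri K P"
    obtain A B C where tABC: "t = (A,B,C)" by (cases t) auto
    have R: "A \<in> key_rings K P" "B \<in> key_rings K P" "C \<in> key_rings K P"
      and ne: "A \<inter> B \<noteq> {}" "B \<inter> C \<noteq> {}" "A \<inter> C \<noteq> {}" using t unfolding tABC Tri_def by auto
    obtain x where x: "x \<in> A" "x \<in> B" using ne(1) by blast
    obtain y where y: "y \<in> B" "y \<in> C" using ne(2) by blast
    obtain z where z: "z \<in> A" "z \<in> C" using ne(3) by blast
    have AP: "A \<subseteq> ?I" "B \<subseteq> ?I" "C \<subseteq> ?I" using R unfolding key_rings_def by auto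
    have "t \<in> ?B x y z" unfolding tABC box_def using R x y z by auto
    moreover have "x \<in> ?I" "y \<in> ?I" "z \<in> ?I" using AP x y z by auto
    ultimately show "t \<in> (\<Union>x\<in>?I. \<Union>y\<in>?I. \<Union>z\<in>?I. ?B x y z)" by blast
  qed
  have "card (Tri K P) \<le> card (\<Union>x\<in>?I. \<Union>y\<in>?I. \<Union>z\<in>?I. ?B x y z)"
    by (rule card_mono[OF _ sub]) (rule finite_subset[OF _ finite_R3], auto simp: box_def)
  also have "\<dots> \<le> (\<Sum>x\<in>?I. card (\<Union>y\<in>?I. \<Union>z\<in>?I. ?B x y z))" by (rule card_UN_le) simp
  also have "\<dots> \<le> (\<Sum>x\<in>?I. \<Sum>y\<in>?I. card (\<Union>z\<in>?I. ?B x y z))"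
    by (intro sum_mono card_UN_le) simp
  also have "\<dots> \<le> (\<Sum>x\<in>?I. \<Sum>y\<in>?I. \<Sum>z\<in>?I. card (?B x y z))"
    by (intro sum_mono card_UN_le) simp
  finally have c1: "real (card (Tri K P)) \<le> (\<Sum>x\<in>?I. \<Sum>y\<in>?I. \<Sum>z\<in>?I. real (card (?B x y z)))"
    by (metis (no_types, lifting) of_nat_le_iff of_nat_sum sum.cong)
  also have "\<dots> \<le> (\<Sum>x\<in>?I. \<Sum>y\<in>?I. \<Sum>z\<in>?I. ?N ^ 3 * (?r^6 + (if x = y then ?r^5 else 0) + (if y = z then ?r^5 else 0) + (if x = z then ?r^5 else 0)
      + (if x = y \<and> y = z then ?r^3 else 0)))"
  proof (intro sum_mono)
    fix x y z assume xyz: "x \<in> ?I" "y \<in> ?I" "z \<in> ?I"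
    have "real (card (?B x y z)) \<le> ?N ^ 3 * ?r ^ (card {x,z} + card {x,y} + card {y,z})"
      using xyz KP by (intro box_bound) auto
    also have "\<dots> \<le> ?N ^ 3 * (?r^6 + (if x = y then ?r^5 else 0) + (if y = z then ?r^5 else 0) + (if x = z then ?r^5 else 0)
      + (if x = y \<and> y = z then ?r^3 else 0))"
      by (rule mult_left_mono[OF up_pw[OF r01]]) (use Npos in simp)
    finally show "real (card (?B x y z)) \<le> \<dots>" .
  qed
  also have "\<dots> = ?N ^ 3 * (\<Sum>x\<in>?I. \<Sum>y\<in>?I. \<Sum>z\<in>?I. (?r^6 + (if x = y then ?r^5 else 0) + (if y = z then ?r^5 else 0) + (if x = z then ?r^5 else 0)
      + (if x = y \<and> y = z then ?r^3 else 0)))"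
    by (simp add: sum_distrib_left)
  also have "\<dots> = ?N ^ 3 * (real P ^ 3 * ?r^6 + 3 * real P ^ 2 * ?r^5 + real P * ?r^3)"
    by (subst sum3_if) auto
  finally have "tr K P \<le> real P ^ 3 * ?r^6 + 3 * real P ^ 2 * ?r^5 + real P * ?r^3"
    unfolding tr_def card_key_rings using Npos by (simp add: field_simps)
  also have "\<dots> = real K ^ 3 / real P ^ 2 + real K ^ 6 / real P ^ 3 + 3 * real K ^ 5 / real P ^ 3"
    using KP by (simp add: power_divide field_simps eval_nat_numeral)
  finally show ?thesis .
qed



definition Ex :: "nat \<Rightarrow> nat \<Rightarrow> nat \<Rightarrow> (nat set \<times> nat set \<times> nat set) set" where
  "Ex K P x = {(A,B,C). A \<in> key_rings K P \<and> B \<in> key_rings K P \<and> C \<in> key_rings K P \<and> A \<inter> B \<inter> C = {x}}"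

definition Fx :: "nat \<Rightarrow> nat \<Rightarrow> nat \<times> nat \<times> nat \<Rightarrow> (nat set \<times> nat set \<times> nat set) set" where
  "Fx K P t = (case t of (x,y,z) \<Rightarrow> {(A,B,C). A \<in> key_rings K P \<and> B \<in> key_rings K P \<and> C \<in> key_rings K P \<and>
      A \<inter> B = {x} \<and> B \<inter> C = {y} \<and> A \<inter> C = {z}})"

definition Dset :: "nat \<Rightarrow> (nat \<times> nat \<times> nat) set" where
  "Dset P = {(x,y,z). x \<in> {1..P} \<and> y \<in> {1..P} \<and> z \<in> {1..P} \<and> x \<noteq> y \<and> y \<noteq> z \<and> x \<noteq> z}"

lemma finite_Ex: "finite (Ex K P x)"
  by (rule finite_subset[OF _ finite_R3]) (auto simp: Ex_def)

lemma finite_Fx: "finite (Fx K P t)"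
  by (rule finite_subset[OF _ finite_R3]) (auto simp: Fx_def split: prod.splits)

lemma finite_Dset: "finite (Dset P)"
  by (rule finite_subset[of _ "{1..P} \<times> {1..P} \<times> {1..P}"]) (auto simp: Dset_def)

lemma Dset_upper: "card (Dset P) \<le> P ^ 3"
proof -
  have "card (Dset P) \<le> card ({1..P} \<times> {1..P} \<times> {1..P})"
    by (rule card_mono) (auto simp: Dset_def)
  thus ?thesis by (simp add: card_cartesian_product power3_eq_cube)
qed

lemma Dset_lower: "real (P ^ 3) \<le> real (card (Dset P)) + 3 * real P ^ 2"
proof -
  let ?I = "{1..P::nat}"
  let ?S1 = "(\<lambda>(x,z). (x,x,z)) ` (?I \<times> ?I)"
  let ?S2 = "(\<lambda>(x,y). (x,y,y)) ` (?I \<times> ?I)"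
  let ?S3 = "(\<lambda>(x,y). (x,y,x)) ` (?I \<times> ?I)"
  have "card (?I \<times> ?I \<times> ?I) \<le> card (Dset P) + card ?S1 + card ?S2 + card ?S3"
    by (rule card_cover3[OF _ _ finite_Dset]) (auto simp: Dset_def)
  moreover have "card ?S1 \<le> P ^ 2" "card ?S2 \<le> P ^ 2" "card ?S3 \<le> P ^ 2"
    by (rule order_trans[OF card_image_le], simp, simp add: card_cartesian_product power2_eq_square)+
  ultimately have "card (?I \<times> ?I \<times> ?I) \<le> card (Dset P) + 3 * P ^ 2" by linarith
  hence "P ^ 3 \<le> card (Dset P) + 3 * P ^ 2" by (simp add: card_cartesian_product power3_eq_cube)
  hence "real (P ^ 3) \<le> real (card (Dset P) + 3 * P ^ 2)" by (simp only: of_nat_le_iff)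
  thus ?thesis by simp
qed

lemma E_lower:
  assumes x: "x \<in> {1..P}" and KP: "1 \<le> K" "K \<le> P"
  shows "real (P choose K) ^ 3 * (real K / real P) ^ 3 - real P * (real (P choose K) ^ 3 * (real K / real P) ^ 6)
           \<le> real (card (Ex K P x))"
proof -
  let ?I = "{1..P}"
  let ?N = "real (P choose K)" and ?r = "real K / real P"
  let ?X = "box K P {x} {x} {x}"
  let ?U = "\<Union>w\<in>?I - {x}. box K P {x,w} {x,w} {x,w}"
  have "card ?X \<le> card (Ex K P x) + card ?U + card ({}::(nat set \<times> nat set \<times> nat set) set) + card ({}::(nat set \<times> nat set \<times> nat set) set)"
  proof (rule card_cover3)
    show "?X - (?U \<union> {} \<union> {}) \<subseteq> Ex K P x"
    proof
      fix t assume t: "t \<in> ?X - (?U \<union> {} \<union> {})"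
      obtain A B C where tABC: "t = (A,B,C)" by (cases t) auto
      have tX: "t \<in> ?X" and tU: "t \<notin> ?U" using t by blast+
      have R: "A \<in> key_rings K P" "B \<in> key_rings K P" "C \<in> key_rings K P" and xin: "x \<in> A" "x \<in> B" "x \<in> C"
        using tX unfolding tABC box_def by auto
      have "A \<inter> B \<inter> C = {x}"
      proof (rule ccontr)
        assume "A \<inter> B \<inter> C \<noteq> {x}"
        then obtain w where w: "w \<in> A" "w \<in> B" "w \<in> C" "w \<noteq> x" using xin by blast
        have "w \<in> ?I" using w R unfolding key_rings_def by auto
        hence "t \<in> box K P {x,w} {x,w} {x,w}" unfolding tABC box_def using R w xin by blast
        thus False using tU \<open>w \<in> ?I\<close> w(4) by blast
      qed
      thus "t \<in> Ex K P x" unfolding tABC Ex_def using R by auto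
    qed
  qed (simp_all add: finite_box finite_Ex)
  hence c: "real (card ?X) \<le> real (card (Ex K P x)) + real (card ?U)" by simp
  have "real (card ?X) = ?N ^ 3 * ?r ^ 3"
    using cnt1[OF x KP] by (simp add: card_box power3_eq_cube)
  moreover have "real (card ?U) \<le> real P * (?N ^ 3 * ?r ^ 6)"
  proof -
    have "card ?U \<le> (\<Sum>w\<in>?I - {x}. card (box K P {x,w} {x,w} {x,w}))" by (rule card_UN_le) simp
    hence "real (card ?U) \<le> real (\<Sum>w\<in>?I - {x}. card (box K P {x,w} {x,w} {x,w}))"
      by (simp only: of_nat_le_iff)
    also have "\<dots> = (\<Sum>w\<in>?I - {x}. real (card (box K P {x,w} {x,w} {x,w})))"
      by (simp only: of_nat_sum)
    also have "\<dots> \<le> (\<Sum>w\<in>?I - {x}. ?N ^ 3 * ?r ^ 6)"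
    proof (rule sum_mono)
      fix w assume w: "w \<in> ?I - {x}"
      have "real (card (box K P {x,w} {x,w} {x,w})) \<le> ?N ^ 3 * ?r ^ (card {x,w} + card {x,w} + card {x,w})"
        using w x KP by (intro box_bound) auto
      also have "card {x,w} + card {x,w} + card {x,w} = 6" using w by (simp add: card2)
      finally show "real (card (box K P {x,w} {x,w} {x,w})) \<le> ?N ^ 3 * ?r ^ 6" .
    qed
    also have "\<dots> = real (card (?I - {x})) * (?N ^ 3 * ?r ^ 6)" by simp
    also have "\<dots> \<le> real P * (?N ^ 3 * ?r ^ 6)"
      using x by (intro mult_right_mono) auto
    finally show ?thesis .
  qed
  ultimately show ?thesis using c by linarith
qed

lemma lo_pw:
  fixes r :: real
  assumes "0 \<le> r" "r \<le> 1" "7 \<le> e" "w \<notin> {x,y,z} \<Longrightarrow> 8 \<le> e"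
  shows "r ^ e \<le> r ^ 8 + (if w \<in> {x,y,z} then r ^ 7 else 0)"
proof (cases "w \<in> {x,y,z}")
  case True
  have "r ^ e \<le> r ^ 7" using assms by (intro power_decreasing) auto
  moreover have "r ^ 8 \<ge> 0" using assms by simp
  ultimately have "r ^ e \<le> r ^ 8 + r ^ 7" by linarith
  thus ?thesis using True by simp
next
  case False
  have "r ^ e \<le> r ^ 8" using assms False by (intro power_decreasing) auto
  thus ?thesis using False by simp
qed

lemma U_bound:
  fixes S1 S2 S3 :: "nat \<Rightarrow> nat set"
  assumes xyz: "x \<in> {1..P}" "y \<in> {1..P}" "z \<in> {1..P}" and KP: "1 \<le> K" "K \<le> P"
    and S: "\<And>w. w \<in> {1..P} - {v} \<Longrightarrow> S1 w \<subseteq> {1..P} \<and> S2 w \<subseteq> {1..P} \<and> S3 w \<subseteq> {1..P}"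
    and e7: "\<And>w. w \<in> {1..P} - {v} \<Longrightarrow> 7 \<le> card (S1 w) + card (S2 w) + card (S3 w)"
    and e8: "\<And>w. w \<in> {1..P} - {v} \<Longrightarrow> w \<notin> {x,y,z} \<Longrightarrow> 8 \<le> card (S1 w) + card (S2 w) + card (S3 w)"
  shows "real (card (\<Union>w\<in>{1..P} - {v}. box K P (S1 w) (S2 w) (S3 w)))
           \<le> real (P choose K) ^ 3 * (real P * (real K / real P) ^ 8 + 3 * (real K / real P) ^ 7)"
proof -
  let ?I = "{1..P}"
  let ?N = "real (P choose K)" and ?r = "real K / real P"
  have r01: "0 \<le> ?r" "?r \<le> 1" using KP by auto
  have N3: "0 \<le> ?N ^ 3" by simp
  let ?g = "\<lambda>w. ?N ^ 3 * (?r ^ 8 + (if w \<in> {x,y,z} then ?r ^ 7 else 0))"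
  have "card (\<Union>w\<in>?I - {v}. box K P (S1 w) (S2 w) (S3 w)) \<le> (\<Sum>w\<in>?I - {v}. card (box K P (S1 w) (S2 w) (S3 w)))"
    by (rule card_UN_le) simp
  hence "real (card (\<Union>w\<in>?I - {v}. box K P (S1 w) (S2 w) (S3 w))) \<le> real (\<Sum>w\<in>?I - {v}. card (box K P (S1 w) (S2 w) (S3 w)))"
    by (simp only: of_nat_le_iff)
  also have "\<dots> = (\<Sum>w\<in>?I - {v}. real (card (box K P (S1 w) (S2 w) (S3 w))))"
    by (simp only: of_nat_sum)
  also have "\<dots> \<le> (\<Sum>w\<in>?I - {v}. ?g w)"
  proof (rule sum_mono)
    fix w assume w: "w \<in> ?I - {v}"
    have "real (card (box K P (S1 w) (S2 w) (S3 w))) \<le> ?N ^ 3 * ?r ^ (card (S1 w) + card (S2 w) + card (S3 w))"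
      using S[OF w] KP by (intro box_bound) auto
    also have "\<dots> \<le> ?g w"
      by (rule mult_left_mono[OF lo_pw[OF r01 e7[OF w] e8[OF w]] N3])
    finally show "real (card (box K P (S1 w) (S2 w) (S3 w))) \<le> ?g w" .
  qed
  also have "\<dots> \<le> (\<Sum>w\<in>?I. ?g w)"
    by (rule sum_mono2) auto
  also have "\<dots> = ?N ^ 3 * (real P * ?r ^ 8 + (\<Sum>w\<in>?I. if w \<in> {x,y,z} then ?r ^ 7 else 0))"
    by (simp add: sum.distrib sum_distrib_left[symmetric])
  also have "(\<Sum>w\<in>?I. if w \<in> {x,y,z} then ?r ^ 7 else 0) = real (card {x,y,z}) * ?r ^ 7"
  proof -
    have "(\<Sum>w\<in>?I. if w \<in> {x,y,z} then ?r ^ 7 else 0) = (\<Sum>w\<in>{w\<in>?I. w \<in> {x,y,z}}. ?r ^ 7)"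
      by (rule sum.inter_filter[symmetric]) simp
    also have "{w\<in>?I. w \<in> {x,y,z}} = {x,y,z}" using xyz by auto
    finally show ?thesis by simp
  qed
  also have "?N ^ 3 * (real P * ?r ^ 8 + real (card {x,y,z}) * ?r ^ 7) \<le> ?N ^ 3 * (real P * ?r ^ 8 + 3 * ?r ^ 7)"
  proof -
    have "card {x,y,z} \<le> 3" by (auto simp: card_insert_if)
    hence "real (card {x,y,z}) * ?r ^ 7 \<le> 3 * ?r ^ 7" using r01 by (intro mult_right_mono) auto
    thus ?thesis by (intro mult_left_mono) (auto simp: zero_le_power)
  qed
  finally show ?thesis .
qed

lemma F_lower:
  assumes xyz: "x \<in> {1..P}" "y \<in> {1..P}" "z \<in> {1..P}" "x \<noteq> y" "y \<noteq> z" "x \<noteq> z"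
    and KP: "1 \<le> K" "K \<le> P"
  shows "(real (P choose K) * (real K * (real K - 1)) / (real P * (real P - 1))) ^ 3
           - 3 * (real (P choose K) ^ 3 * (real P * (real K / real P) ^ 8 + 3 * (real K / real P) ^ 7))
         \<le> real (card (Fx K P (x,y,z)))"
proof -
  let ?I = "{1..P}"
  let ?N = "real (P choose K)" and ?r = "real K / real P"
  let ?c2 = "?N * (real K * (real K - 1)) / (real P * (real P - 1))"
  have P2: "real P * (real P - 1) > 0" using xyz by auto
  have c2: "real (cnt K P {a,b}) = ?c2" if "a \<in> ?I" "b \<in> ?I" "a \<noteq> b" for a b
    using cnt2[OF that KP] P2 by (metis P2 less_irrefl nonzero_mult_div_cancel_right times_divide_eq_left)
  let ?X = "box K P {x,z} {x,y} {y,z}"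
  let ?U1 = "\<Union>w\<in>?I - {x}. box K P {x,z,w} {x,y,w} {y,z}"
  let ?U2 = "\<Union>w\<in>?I - {y}. box K P {x,z} {x,y,w} {y,z,w}"
  let ?U3 = "\<Union>w\<in>?I - {z}. box K P {x,z,w} {x,y} {y,z,w}"
  have "card ?X \<le> card (Fx K P (x,y,z)) + card ?U1 + card ?U2 + card ?U3"
  proof (rule card_cover3)
    show "?X - (?U1 \<union> ?U2 \<union> ?U3) \<subseteq> Fx K P (x,y,z)"
    proof
      fix t assume t: "t \<in> ?X - (?U1 \<union> ?U2 \<union> ?U3)"
      have tX: "t \<in> ?X" and tU1: "t \<notin> ?U1" and tU2: "t \<notin> ?U2" and tU3: "t \<notin> ?U3" using t by blast+
      obtain A B C where tABC: "t = (A,B,C)" by (cases t) auto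
      have R: "A \<in> key_rings K P" "B \<in> key_rings K P" "C \<in> key_rings K P"
        and inc: "x \<in> A" "z \<in> A" "x \<in> B" "y \<in> B" "y \<in> C" "z \<in> C"
        using tX unfolding tABC box_def by auto
      have sub: "A \<subseteq> ?I" "B \<subseteq> ?I" "C \<subseteq> ?I" using R unfolding key_rings_def by auto
      have AB: "A \<inter> B = {x}"
      proof (rule ccontr)
        assume "A \<inter> B \<noteq> {x}"
        then obtain w where w: "w \<in> A" "w \<in> B" "w \<noteq> x" using inc by blast
        have wI: "w \<in> ?I - {x}" using w sub by auto
        have "t \<in> box K P {x,z,w} {x,y,w} {y,z}" unfolding tABC box_def using R w inc by blast
        thus False using tU1 wI by blast
      qed
      have BC: "B \<inter> C = {y}"
      proof (rule ccontr)
        assume "B \<inter> C \<noteq> {y}"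
        then obtain w where w: "w \<in> B" "w \<in> C" "w \<noteq> y" using inc by blast
        have wI: "w \<in> ?I - {y}" using w sub by auto
        have "t \<in> box K P {x,z} {x,y,w} {y,z,w}" unfolding tABC box_def using R w inc by blast
        thus False using tU2 wI by blast
      qed
      have AC: "A \<inter> C = {z}"
      proof (rule ccontr)
        assume "A \<inter> C \<noteq> {z}"
        then obtain w where w: "w \<in> A" "w \<in> C" "w \<noteq> z" using inc by blast
        have wI: "w \<in> ?I - {z}" using w sub by auto
        have "t \<in> box K P {x,z,w} {x,y} {y,z,w}" unfolding tABC box_def using R w inc by blast
        thus False using tU3 wI by blast
      qed
      show "t \<in> Fx K P (x,y,z)" unfolding tABC Fx_def using R AB BC AC by auto
    qed
  qed (simp_all add: finite_box finite_Fx)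
  hence c: "real (card ?X) \<le> real (card (Fx K P (x,y,z))) + real (card ?U1) + real (card ?U2) + real (card ?U3)"
    by (simp only: of_nat_add[symmetric] of_nat_le_iff)
  have X: "real (card ?X) = ?c2 ^ 3"
    using c2[of x z] c2[of x y] c2[of y z] xyz by (simp add: card_box power3_eq_cube)
  let ?B = "?N ^ 3 * (real P * ?r ^ 8 + 3 * ?r ^ 7)"
  have u1: "real (card ?U1) \<le> ?B"
    by (rule U_bound[OF xyz(1-3) KP]) (use xyz in \<open>auto simp: card_insert_if\<close>)
  have u2: "real (card ?U2) \<le> ?B"
    by (rule U_bound[OF xyz(1-3) KP]) (use xyz in \<open>auto simp: card_insert_if\<close>)
  have u3: "real (card ?U3) \<le> ?B"
    by (rule U_bound[OF xyz(1-3) KP]) (use xyz in \<open>auto simp: card_insert_if\<close>)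
  show ?thesis using c X u1 u2 u3 by linarith
qed

lemma alg_id:
  fixes N P r Q rho E :: real
  shows "N ^ 3 * (P * r ^ 3 - P ^ 2 * r ^ 6 + Q * rho ^ 3 - 3 * P ^ 3 * E)
     = P * (N ^ 3 * r ^ 3 - P * (N ^ 3 * r ^ 6)) + (Q * (N * rho) ^ 3 - P ^ 3 * (3 * (N ^ 3 * E)))"
  by (simp add: algebra_simps power_mult_distrib power2_eq_square)

lemma tr_lower:
  assumes KP: "1 \<le> K" "K \<le> P"
  shows "real P * (real K / real P) ^ 3 - real P ^ 2 * (real K / real P) ^ 6
         + (real P ^ 3 - 3 * real P ^ 2) * ((real K * (real K - 1)) / (real P * (real P - 1))) ^ 3
         - 3 * real P ^ 3 * (real P * (real K / real P) ^ 8 + 3 * (real K / real P) ^ 7) \<le> tr K P"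
proof -
  let ?I = "{1..P}"
  let ?N = "real (P choose K)" and ?r = "real K / real P"
  let ?rho = "(real K * (real K - 1)) / (real P * (real P - 1))"
  let ?c2 = "?N * (real K * (real K - 1)) / (real P * (real P - 1))"
  let ?B = "?N ^ 3 * (real P * ?r ^ 8 + 3 * ?r ^ 7)"
  have Npos: "?N > 0" using KP by simp
  have c2rho: "?c2 = ?N * ?rho" by simp
  have rho0: "?rho \<ge> 0" using KP by (intro divide_nonneg_nonneg mult_nonneg_nonneg) auto
  have B0: "?B \<ge> 0" by simp
  let ?EU = "\<Union>x\<in>?I. Ex K P x"
  let ?FU = "\<Union>t\<in>Dset P. Fx K P t"
  have sub: "?EU \<union> ?FU \<subseteq> Tri K P"
    unfolding Tri_def Ex_def Fx_def by (auto split: prod.splits)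
  have disj: "?EU \<inter> ?FU = {}"
  proof (rule ccontr)
    assume "?EU \<inter> ?FU \<noteq> {}"
    then obtain t x u where tu: "t \<in> Ex K P x" "u \<in> Dset P" "t \<in> Fx K P u" by blast
    obtain a b c where u: "u = (a,b,c)" by (cases u) auto
    obtain A B C where tt: "t = (A,B,C)" by (cases t) auto
    have ab: "a \<noteq> b" using tu(2) unfolding u Dset_def by auto
    have e1: "A \<inter> B \<inter> C = {x}" using tu(1) unfolding tt Ex_def by auto
    have e2: "A \<inter> B = {a}" "B \<inter> C = {b}" using tu(3) unfolding tt u Fx_def by auto
    have "A \<inter> B \<inter> C = (A \<inter> B) \<inter> (B \<inter> C)" by blast
    also have "\<dots> = {}" using e2 ab by auto
    finally show False using e1 by simp
  qed
  have cE: "card ?EU = (\<Sum>x\<in>?I. card (Ex K P x))"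
    by (rule card_UN_disjoint) (simp, simp add: finite_Ex, auto simp: Ex_def)
  have cF: "card ?FU = (\<Sum>t\<in>Dset P. card (Fx K P t))"
  proof (rule card_UN_disjoint)
    show "\<forall>i\<in>Dset P. \<forall>j\<in>Dset P. i \<noteq> j \<longrightarrow> Fx K P i \<inter> Fx K P j = {}"
    proof (intro ballI impI)
      fix i j assume "i \<in> Dset P" "j \<in> Dset P" "i \<noteq> j"
      obtain a b c where i: "i = (a,b,c)" by (cases i) auto
      obtain a' b' c' where j: "j = (a',b',c')" by (cases j) auto
      show "Fx K P i \<inter> Fx K P j = {}"
        using \<open>i \<noteq> j\<close> unfolding i j Fx_def by auto
    qed
  qed (auto simp: finite_Fx finite_Dset)
  have "card (?EU \<union> ?FU) \<le> card (Tri K P)"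
    by (rule card_mono[OF _ sub]) (rule finite_subset[OF _ finite_R3], auto simp: Tri_def)
  moreover have "card (?EU \<union> ?FU) = card ?EU + card ?FU"
    by (rule card_Un_disjoint[OF _ _ disj]) (auto simp: finite_Ex finite_Fx finite_Dset)
  ultimately have ct: "real (\<Sum>x\<in>?I. card (Ex K P x)) + real (\<Sum>t\<in>Dset P. card (Fx K P t)) \<le> real (card (Tri K P))"
    using cE cF by (simp only: of_nat_add[symmetric] of_nat_le_iff)
  have s1: "real P * (?N ^ 3 * ?r ^ 3 - real P * (?N ^ 3 * ?r ^ 6)) \<le> real (\<Sum>x\<in>?I. card (Ex K P x))"
  proof -
    have "real P * (?N ^ 3 * ?r ^ 3 - real P * (?N ^ 3 * ?r ^ 6)) = (\<Sum>x\<in>?I. (?N ^ 3 * ?r ^ 3 - real P * (?N ^ 3 * ?r ^ 6)))"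
      by simp
    also have "\<dots> \<le> (\<Sum>x\<in>?I. real (card (Ex K P x)))"
      by (rule sum_mono) (rule E_lower[OF _ KP], simp)
    finally show ?thesis by (simp add: of_nat_sum)
  qed
  have s2: "(real P ^ 3 - 3 * real P ^ 2) * ?c2 ^ 3 - real P ^ 3 * (3 * ?B) \<le> real (\<Sum>t\<in>Dset P. card (Fx K P t))"
  proof -
    have "(\<Sum>t\<in>Dset P. (?c2 ^ 3 - 3 * ?B)) \<le> (\<Sum>t\<in>Dset P. real (card (Fx K P t)))"
    proof (rule sum_mono)
      fix t assume "t \<in> Dset P"
      then obtain x y z where t: "t = (x,y,z)" "x \<in> ?I" "y \<in> ?I" "z \<in> ?I" "x \<noteq> y" "y \<noteq> z" "x \<noteq> z"
        unfolding Dset_def by auto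
      show "?c2 ^ 3 - 3 * ?B \<le> real (card (Fx K P t))"
        unfolding t(1) by (rule F_lower[OF t(2-7) KP])
    qed
    hence h: "real (card (Dset P)) * ?c2 ^ 3 - real (card (Dset P)) * (3 * ?B) \<le> real (\<Sum>t\<in>Dset P. card (Fx K P t))"
      by (simp add: of_nat_sum algebra_simps)
    have "?c2 \<ge> 0" unfolding c2rho using Npos rho0 by (intro mult_nonneg_nonneg) auto
    hence c20: "?c2 ^ 3 \<ge> 0" by simp
    have "(real P ^ 3 - 3 * real P ^ 2) * ?c2 ^ 3 \<le> real (card (Dset P)) * ?c2 ^ 3"
      using Dset_lower[of P] c20 by (intro mult_right_mono) auto
    moreover have "real (card (Dset P)) * (3 * ?B) \<le> real P ^ 3 * (3 * ?B)"
      using Dset_upper[of P] B0 by (intro mult_right_mono) (auto simp flip: of_nat_power)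
    ultimately show ?thesis using h by linarith
  qed
  have "?N ^ 3 * (real P * ?r ^ 3 - real P ^ 2 * ?r ^ 6 + (real P ^ 3 - 3 * real P ^ 2) * ?rho ^ 3
         - 3 * real P ^ 3 * (real P * ?r ^ 8 + 3 * ?r ^ 7))
      = real P * (?N ^ 3 * ?r ^ 3 - real P * (?N ^ 3 * ?r ^ 6)) + ((real P ^ 3 - 3 * real P ^ 2) * (?N * ?rho) ^ 3 - real P ^ 3 * (3 * ?B))"
    by (rule alg_id)
  also have "\<dots> \<le> real (card (Tri K P))" using s1 s2[unfolded c2rho] ct by linarith
  finally show ?thesis unfolding tr_def card_key_rings using Npos
    by (simp add: pos_le_divide_eq mult.commute)
qed



lemma binom_shift:
  assumes "j < K" "2 * K \<le> P"
  shows "real ((P - Suc j) choose K) = (1 - real K / (real P - real j)) * real ((P - j) choose K)"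
proof -
  have "(P - j - K) * ((P - j) choose K) = (P - j) * ((P - j - 1) choose K)"
    by (rule binomial_absorb_comp)
  hence "real (P - j - K) * real ((P - j) choose K) = real (P - j) * real ((P - Suc j) choose K)"
    by (metis diff_Suc_eq_diff_pred of_nat_mult diff_diff_left Suc_eq_plus1)
  moreover have "real (P - j - K) = real P - real j - real K" "real (P - j) = real P - real j"
    using assms by (auto simp: of_nat_diff)
  moreover have "real P - real j > 0" using assms by linarith
  ultimately show ?thesis by (simp add: field_simps)
qed

lemma binom_pow_bounds:
  assumes "j \<le> K" "1 \<le> K" "2 * K \<le> P"
  shows "real (P choose K) * (1 - real K / (real P - real K)) ^ j \<le> real ((P - j) choose K)
       \<and> real ((P - j) choose K) \<le> real (P choose K) * (1 - real K / real P) ^ j"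
  using assms(1)
proof (induction j)
  case 0 then show ?case by simp
next
  case (Suc j)
  have jK: "j < K" using Suc.prems by simp
  have IH: "real (P choose K) * (1 - real K / (real P - real K)) ^ j \<le> real ((P - j) choose K)"
    "real ((P - j) choose K) \<le> real (P choose K) * (1 - real K / real P) ^ j"
    using Suc.IH jK by auto
  have eq: "real ((P - Suc j) choose K) = (1 - real K / (real P - real j)) * real ((P - j) choose K)"
    by (rule binom_shift[OF jK assms(3)])
  have PK: "real P - real K \<ge> real K" using assms by simp
  have Pj1: "real P - real j > real P - real K" using jK by simp
  have Kpos: "real K > 0" using assms by simp
  have lo: "1 - real K / (real P - real K) \<le> 1 - real K / (real P - real j)"
    using PK Pj1 Kpos by (simp add: frac_le)
  have lo0: "0 \<le> 1 - real K / (real P - real K)" using PK Kpos by simp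
  have hi: "1 - real K / (real P - real j) \<le> 1 - real K / real P"
    using Pj1 PK Kpos by (simp add: frac_le)
  have hi0: "0 \<le> 1 - real K / (real P - real j)" using lo lo0 by linarith
  have C0: "0 \<le> real ((P - j) choose K)" by simp
  have "real (P choose K) * (1 - real K / (real P - real K)) ^ Suc j
      = (1 - real K / (real P - real K)) * (real (P choose K) * (1 - real K / (real P - real K)) ^ j)"
    by simp
  also have "\<dots> \<le> (1 - real K / (real P - real j)) * real ((P - j) choose K)"
    using lo lo0 IH(1) C0 by (intro mult_mono) auto
  finally have A: "real (P choose K) * (1 - real K / (real P - real K)) ^ Suc j \<le> real ((P - Suc j) choose K)"
    using eq by simp
  have "real ((P - Suc j) choose K) \<le> (1 - real K / real P) * (real (P choose K) * (1 - real K / real P) ^ j)"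
    unfolding eq using hi hi0 IH(2) C0 by (intro mult_mono) auto
  hence B: "real ((P - Suc j) choose K) \<le> real (P choose K) * (1 - real K / real P) ^ Suc j"
    by (simp add: mult.left_commute)
  show ?case using A B by simp
qed

lemma q_upper:
  assumes "1 \<le> K" "2 * K \<le> P"
  shows "q K P \<le> 1 / (1 + real K ^ 2 / real P)"
proof -
  let ?t = "real K / real P"
  have t01: "0 \<le> ?t" "?t \<le> 1" using assms by auto
  have Npos: "real (P choose K) > 0" using assms by simp
  have "q K P = real ((P - K) choose K) / real (P choose K)" using assms unfolding q_def by simp
  also have "\<dots> \<le> (1 - ?t) ^ K"
    using binom_pow_bounds[OF le_refl assms] Npos by (simp add: divide_le_eq mult.commute)
  also have "\<dots> \<le> 1 / (1 + real K ^ 2 / real P)"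
  proof -
    have "(1 - ?t) ^ K * (1 + ?t) ^ K = (1 - ?t ^ 2) ^ K" by (simp add: power_mult_distrib[symmetric] algebra_simps power2_eq_square)
    also have "\<dots> \<le> 1" using t01 by (intro power_le_one) (auto simp: power_le_one)
    finally have h1: "(1 - ?t) ^ K * (1 + ?t) ^ K \<le> 1" .
    have h2: "1 + real K ^ 2 / real P \<le> (1 + ?t) ^ K"
      using Bernoulli_inequality[of ?t K] t01 by (simp add: power2_eq_square)
    have h3: "0 \<le> (1 - ?t) ^ K" using t01 by simp
    have "(1 - ?t) ^ K * (1 + real K ^ 2 / real P) \<le> (1 - ?t) ^ K * (1 + ?t) ^ K"
      using h2 h3 by (rule mult_left_mono)
    hence "(1 - ?t) ^ K * (1 + real K ^ 2 / real P) \<le> 1" using h1 by linarith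
    moreover have "1 + real K ^ 2 / real P > 0" using assms by (simp add: add_pos_nonneg)
    ultimately show ?thesis by (simp add: le_divide_eq)
  qed
  finally show ?thesis .
qed

lemma q_lower:
  assumes "1 \<le> K" "2 * K \<le> P"
  shows "1 - real K ^ 2 / (real P - real K) \<le> q K P"
proof -
  let ?s = "real K / (real P - real K)"
  have PK: "real P - real K \<ge> real K" using assms by simp
  have s01: "0 \<le> ?s" "?s \<le> 1" using PK assms by auto
  have Npos: "real (P choose K) > 0" using assms by simp
  have "1 - real K ^ 2 / (real P - real K) = 1 + real K * (- ?s)"
    by (simp add: power2_eq_square)
  also have "\<dots> \<le> (1 + - ?s) ^ K" using s01 by (intro Bernoulli_inequality) simp
  also have "\<dots> = (1 - ?s) ^ K" by simp
  also have "\<dots> \<le> real ((P - K) choose K) / real (P choose K)"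
    using binom_pow_bounds[OF le_refl assms] Npos by (simp add: le_divide_eq mult.commute)
  also have "\<dots> = q K P" using assms unfolding q_def by simp
  finally show ?thesis .
qed



lemma up_alg:
  fixes k p :: real
  assumes "k \<ge> 1" "p > 0"
  shows "k ^ 3 / p ^ 2 + k ^ 6 / p ^ 3 + 3 * k ^ 5 / p ^ 3 \<le> (k ^ 3 / p ^ 2 + k ^ 6 / p ^ 3) * (1 + 3 * (k ^ 2 / p))"
proof -
  have "(k ^ 3 / p ^ 2 + k ^ 6 / p ^ 3) * (1 + 3 * (k ^ 2 / p)) - (k ^ 3 / p ^ 2 + k ^ 6 / p ^ 3 + 3 * k ^ 5 / p ^ 3)
        = 3 * k ^ 8 / p ^ 4"
    using assms by (simp add: field_simps power2_eq_square power3_eq_cube eval_nat_numeral)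
  moreover have "3 * k ^ 8 / p ^ 4 \<ge> 0" using assms by simp
  ultimately show ?thesis by linarith
qed

lemma low_alg:
  fixes k p :: real
  assumes k: "k \<ge> 1" and p: "p \<ge> 3"
  shows "(k ^ 3 / p ^ 2 + k ^ 6 / p ^ 3) * (1 - (4 / p + 3 * (k ^ 2 / p) + 9 * (k / p)))
    \<le> p * (k / p) ^ 3 - p ^ 2 * (k / p) ^ 6
         + (p ^ 3 - 3 * p ^ 2) * ((k * (k - 1)) / (p * (p - 1))) ^ 3
         - 3 * p ^ 3 * (p * (k / p) ^ 8 + 3 * (k / p) ^ 7)"
proof -
  have pp: "p * (p - 1) > 0" "p * (p - 1) \<le> p ^ 2" using p by (auto simp: power2_eq_square algebra_simps)
  have nn: "k * (k - 1) \<ge> 0" using k by simp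
  have r1: "(k * (k - 1)) / p ^ 2 \<le> (k * (k - 1)) / (p * (p - 1))"
  proof (rule divide_left_mono[OF pp(2) nn])
    show "0 < p ^ 2 * (p * (p - 1))" using pp(1) p by (intro mult_pos_pos) auto
  qed
  have r0: "0 \<le> (k * (k - 1)) / p ^ 2" using nn by simp
  have r3: "((k * (k - 1)) / p ^ 2) ^ 3 \<le> ((k * (k - 1)) / (p * (p - 1))) ^ 3"
    using r1 r0 by (rule power_mono)
  have kk: "k ^ 6 - 3 * k ^ 5 \<le> (k * (k - 1)) ^ 3"
  proof -
    have "(k * (k - 1)) ^ 3 - (k ^ 6 - 3 * k ^ 5) = k ^ 3 * (3 * k - 1)"
      by (simp add: algebra_simps power2_eq_square power3_eq_cube eval_nat_numeral)
    moreover have "k ^ 3 * (3 * k - 1) \<ge> 0" using k by simp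
    ultimately show ?thesis by linarith
  qed
  have Q0: "p ^ 3 - 3 * p ^ 2 \<ge> 0"
  proof -
    have "p ^ 3 - 3 * p ^ 2 = p ^ 2 * (p - 3)" by (simp add: algebra_simps power2_eq_square power3_eq_cube)
    thus ?thesis using p by simp
  qed
  have t3: "(p ^ 3 - 3 * p ^ 2) * ((k ^ 6 - 3 * k ^ 5) / p ^ 6) \<le> (p ^ 3 - 3 * p ^ 2) * ((k * (k - 1)) / (p * (p - 1))) ^ 3"
  proof -
    have "(k ^ 6 - 3 * k ^ 5) / p ^ 6 \<le> (k * (k - 1)) ^ 3 / p ^ 6"
      using kk p by (intro divide_right_mono) auto
    also have "\<dots> = ((k * (k - 1)) / p ^ 2) ^ 3" by (simp add: power_divide power_mult[symmetric])
    also have "\<dots> \<le> ((k * (k - 1)) / (p * (p - 1))) ^ 3" by (rule r3)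
    finally show ?thesis using Q0 by (intro mult_left_mono) auto
  qed
  have ident: "p * (k / p) ^ 3 - p ^ 2 * (k / p) ^ 6 + (p ^ 3 - 3 * p ^ 2) * ((k ^ 6 - 3 * k ^ 5) / p ^ 6)
         - 3 * p ^ 3 * (p * (k / p) ^ 8 + 3 * (k / p) ^ 7)
       - (k ^ 3 / p ^ 2 + k ^ 6 / p ^ 3) * (1 - (4 / p + 3 * (k ^ 2 / p) + 9 * (k / p)))
       = (9 * k ^ 5 * p ^ 2 + 4 * k ^ 3 * p ^ 3 + 9 * k ^ 4 * p ^ 3) / p ^ 6"
    using p by (simp add: field_simps power_divide eval_nat_numeral)
  have "(9 * k ^ 5 * p ^ 2 + 4 * k ^ 3 * p ^ 3 + 9 * k ^ 4 * p ^ 3) / p ^ 6 \<ge> 0"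
    using k p by simp
  thus ?thesis using ident t3 by linarith
qed



theorem corollary1:
  fixes K P :: "nat \<Rightarrow> nat" and p :: "nat \<Rightarrow> real"
  assumes scaling: "\<And>n. 1 \<le> K n \<and> K n \<le> P n"
    and lim: "(\<lambda>n. real (K n)^2 / real (P n)) \<longlonglongrightarrow> 0"
    and p_range: "\<And>n. 0 \<le> p n \<and> p n \<le> 1"
    and p_equiv: "(\<lambda>n. p n / (1 - q (K n) (P n))) \<longlonglongrightarrow> 1"
  shows "(\<lambda>n. (ET_rkg n (K n) (P n) / ET_er n (p n))
                / (1 + real (P n) / real (K n)^3)) \<longlonglongrightarrow> 1"
proof -
  define x where "x n = real (K n) ^ 2 / real (P n)" for n
  define M where "M n = real (K n) ^ 3 / real (P n) ^ 2 + real (K n) ^ 6 / real (P n) ^ 3" for n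
  have K1: "1 \<le> real (K n)" for n using scaling[of n] by simp
  have KP: "real (K n) \<le> real (P n)" for n using scaling[of n] by simp
  have Ppos: "0 < real (P n)" for n using K1[of n] KP[of n] by linarith
  have x0: "x \<longlonglongrightarrow> 0" using lim unfolding x_def .
  have xpos: "x n > 0" for n unfolding x_def using K1[of n] Ppos[of n] by simp
  have invP: "(\<lambda>n. 1 / real (P n)) \<longlonglongrightarrow> 0"
  proof (rule tendsto_sandwich[OF _ _ tendsto_const x0])
    show "\<forall>\<^sub>F n in sequentially. 0 \<le> 1 / real (P n)" by simp
    show "\<forall>\<^sub>F n in sequentially. 1 / real (P n) \<le> x n"
    proof (intro always_eventually allI)
      fix n
      have "1 \<le> real (K n) ^ 2" using K1[of n] by (simp add: one_le_power)
      thus "1 / real (P n) \<le> x n" unfolding x_def using Ppos[of n] by (simp add: divide_right_mono)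
    qed
  qed
  have KoverP: "(\<lambda>n. real (K n) / real (P n)) \<longlonglongrightarrow> 0"
  proof (rule tendsto_sandwich[OF _ _ tendsto_const x0])
    show "\<forall>\<^sub>F n in sequentially. 0 \<le> real (K n) / real (P n)" by simp
    show "\<forall>\<^sub>F n in sequentially. real (K n) / real (P n) \<le> x n"
    proof (intro always_eventually allI)
      fix n
      have "real (K n) \<le> real (K n) ^ 2" using K1[of n] by (simp add: power2_eq_square)
      thus "real (K n) / real (P n) \<le> x n" unfolding x_def using Ppos[of n] by (simp add: divide_right_mono)
    qed
  qed
  have ev1: "eventually (\<lambda>n. 1 / real (P n) < 1/3) sequentially"
    by (rule order_tendstoD(2)[OF invP]) simp
  have ev2: "eventually (\<lambda>n. real (K n) / real (P n) < 1/2) sequentially"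
    by (rule order_tendstoD(2)[OF KoverP]) simp
  have evP3: "eventually (\<lambda>n. 3 \<le> P n \<and> 2 * K n \<le> P n) sequentially"
    using ev1 ev2
  proof eventually_elim
    case (elim n)
    have "3 < real (P n)" using elim(1) Ppos[of n] by (simp add: field_simps)
    moreover have "2 * real (K n) < real (P n)" using elim(2) Ppos[of n] by (simp add: field_simps)
    ultimately show ?case by linarith
  qed
  have Mpos: "M n > 0" for n unfolding M_def using K1[of n] Ppos[of n] by (intro add_pos_pos) auto
  have eps0: "(\<lambda>n. 1 - (4 / real (P n) + 3 * x n + 9 * (real (K n) / real (P n)))) \<longlonglongrightarrow> 1"
  proof -
    have "(\<lambda>n. 1 - (4 * (1 / real (P n)) + 3 * x n + 9 * (real (K n) / real (P n)))) \<longlonglongrightarrow> 1 - (4 * 0 + 3 * 0 + 9 * 0)"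
      by (intro tendsto_intros invP x0 KoverP)
    thus ?thesis by simp
  qed
  have up0: "(\<lambda>n. 1 + 3 * x n) \<longlonglongrightarrow> 1"
    using tendsto_add[OF tendsto_const tendsto_mult[OF tendsto_const x0], of 1 3] by simp
  have trM: "(\<lambda>n. tr (K n) (P n) / M n) \<longlonglongrightarrow> 1"
  proof (rule tendsto_sandwich[OF _ _ eps0 up0])
    show "\<forall>\<^sub>F n in sequentially. 1 - (4 / real (P n) + 3 * x n + 9 * (real (K n) / real (P n))) \<le> tr (K n) (P n) / M n"
      using evP3
    proof eventually_elim
      case (elim n)
      have "M n * (1 - (4 / real (P n) + 3 * x n + 9 * (real (K n) / real (P n)))) \<le> tr (K n) (P n)"
        using low_alg[OF K1[of n], of "real (P n)"] tr_lower[of "K n" "P n"] scaling[of n] elim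
        unfolding M_def x_def by (simp add: numeral_le_real_of_nat_iff)
      thus ?case using Mpos[of n] by (simp add: le_divide_eq mult.commute)
    qed
    show "\<forall>\<^sub>F n in sequentially. tr (K n) (P n) / M n \<le> 1 + 3 * x n"
    proof (intro always_eventually allI)
      fix n
      have "tr (K n) (P n) \<le> M n * (1 + 3 * x n)"
        using up_alg[OF K1[of n] Ppos[of n]] tr_upper[of "K n" "P n"] scaling[of n]
        unfolding M_def x_def by linarith
      thus "tr (K n) (P n) / M n \<le> 1 + 3 * x n" using Mpos[of n] by (simp add: divide_le_eq mult.commute)
    qed
  qed
  have lo1: "(\<lambda>n. 1 / (1 + x n)) \<longlonglongrightarrow> 1"
  proof -
    have "(\<lambda>n. 1 / (1 + x n)) \<longlonglongrightarrow> 1 / (1 + 0)" by (intro tendsto_intros x0) simp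
    thus ?thesis by simp
  qed
  have hi1: "(\<lambda>n. 1 / (1 - real (K n) / real (P n))) \<longlonglongrightarrow> 1"
  proof -
    have "(\<lambda>n. 1 / (1 - real (K n) / real (P n))) \<longlonglongrightarrow> 1 / (1 - 0)" by (intro tendsto_intros KoverP) simp
    thus ?thesis by simp
  qed
  have qx: "(\<lambda>n. (1 - q (K n) (P n)) / x n) \<longlonglongrightarrow> 1"
  proof (rule tendsto_sandwich[OF _ _ lo1 hi1])
    show "\<forall>\<^sub>F n in sequentially. 1 / (1 + x n) \<le> (1 - q (K n) (P n)) / x n"
      using evP3
    proof eventually_elim
      case (elim n)
      have "q (K n) (P n) \<le> 1 / (1 + x n)" using q_upper[of "K n" "P n"] scaling[of n] elim
        unfolding x_def by simp
      hence "x n / (1 + x n) \<le> 1 - q (K n) (P n)" using xpos[of n]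
        by (simp add: field_simps)
      thus ?case using xpos[of n] by (simp add: field_simps)
    qed
    show "\<forall>\<^sub>F n in sequentially. (1 - q (K n) (P n)) / x n \<le> 1 / (1 - real (K n) / real (P n))"
      using evP3
    proof eventually_elim
      case (elim n)
      have PK: "real (P n) - real (K n) > 0" using elim by simp
      have "1 - q (K n) (P n) \<le> real (K n) ^ 2 / (real (P n) - real (K n))"
        using q_lower[of "K n" "P n"] scaling[of n] elim by simp
      also have "\<dots> = x n * (1 / (1 - real (K n) / real (P n)))"
        unfolding x_def using PK Ppos[of n] by (simp add: field_simps)
      finally show ?case using xpos[of n] by (simp add: divide_le_eq mult.commute)
    qed
  qed
  have px: "(\<lambda>n. p n / x n) \<longlonglongrightarrow> 1"
  proof -
    have A: "(\<lambda>n. (p n / (1 - q (K n) (P n))) * ((1 - q (K n) (P n)) / x n)) \<longlonglongrightarrow> 1"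
      using tendsto_mult[OF p_equiv qx] by simp
    have "eventually (\<lambda>n. (p n / (1 - q (K n) (P n))) * ((1 - q (K n) (P n)) / x n) = p n / x n) sequentially"
      using evP3
    proof eventually_elim
      case (elim n)
      have "q (K n) (P n) \<le> 1 / (1 + x n)" using q_upper[of "K n" "P n"] scaling[of n] elim
        unfolding x_def by simp
      moreover have "1 / (1 + x n) < 1" using xpos[of n] by simp
      ultimately have "1 - q (K n) (P n) \<noteq> 0" by linarith
      thus ?case by simp
    qed
    from Lim_transform_eventually[OF A this] show ?thesis .
  qed
  have xp: "(\<lambda>n. x n / p n) \<longlonglongrightarrow> 1"
  proof -
    have "(\<lambda>n. inverse (p n / x n)) \<longlonglongrightarrow> inverse 1" by (rule tendsto_inverse[OF px]) simp
    thus ?thesis by simp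
  qed
  have final: "(\<lambda>n. (tr (K n) (P n) / M n) * (x n / p n) ^ 3) \<longlonglongrightarrow> 1"
    using tendsto_mult[OF trM tendsto_power[OF xp, of 3]] by simp
  have evp: "eventually (\<lambda>n. p n / x n > 1/2) sequentially"
    by (rule order_tendstoD(1)[OF px]) simp
  have evn: "eventually (\<lambda>n. 3 \<le> n) sequentially" by (rule eventually_ge_at_top)
  have "eventually (\<lambda>n. (tr (K n) (P n) / M n) * (x n / p n) ^ 3 =
          (ET_rkg n (K n) (P n) / ET_er n (p n)) / (1 + real (P n) / real (K n)^3)) sequentially"
    using evp evn
  proof eventually_elim
    case (elim n)
    have pp: "p n > 0" using elim(1) xpos[of n] by (simp add: field_simps)
    have cpos: "real (n choose 3) > 0" using elim(2) by simp
    have e1: "ET_rkg n (K n) (P n) / ET_er n (p n) = tr (K n) (P n) / p n ^ 3"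
      using ET_rkg_eq[of "K n" "P n" n] ET_er_eq[of "p n" n] scaling[of n] p_range[of n] cpos by simp
    have e2: "M n = x n ^ 3 * (1 + real (P n) / real (K n)^3)"
      unfolding M_def x_def using K1[of n] Ppos[of n]
      by (simp add: field_simps power2_eq_square power3_eq_cube eval_nat_numeral)
    have c0: "1 + real (P n) / real (K n)^3 > 0" using K1[of n] Ppos[of n] by (simp add: add_pos_nonneg)
    have gen: "(t / (a ^ 3 * c)) * (a / b) ^ 3 = (t / b ^ 3) / c" if "a > 0" "b > 0" "c > 0" for t a b c :: real
      using that by (simp add: field_simps power_divide)
    show ?case unfolding e1 e2 by (rule gen[OF xpos pp c0])
  qed
  from Lim_transform_eventually[OF final this] show ?thesis .
qed


end
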